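(* Let $\mathbf{z}\sim\mathcal{N}(\mathbf{0},\mathbf{I}_{d\times d})$, $\mathbf{x}\in\mathbb{R}^d$, $y=\langle\mathbf{x},\mathbf{z}\rangle$, and let $\mathbf{D}^*=[\mathbf{v}_1,\dots,\mathbf{v}_n]\in\mathbb{R}^{d\times n}$ be column-orthogonal, with queries $q_i=\langle\mathbf{v}_i,\mathbf{z}\rangle$ whose observed values are $r_i$. If $\mathbf{D}=[\mathbf{d}_1,\dots,\mathbf{d}_n]=\mathbf{D}^*$, then $$f_{\mathbf{D}}\big(\mathbf{x},\{r_{\pi(i)}\}_{i=1}^k\big)=\sum_{i\in S}\langle\mathbf{d}_i,\mathbf{x}\rangle r_i,$$ where $S=\arg\max_{T\subseteq[n],|T|\le k}\sum_{i\in T}|\langle\mathbf{d}_i,\mathbf{x}\rangle|$ is the set of indices of the $k$ largest values of $|\langle\mathbf{d}_i,\mathbf{x}\rangle|$.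
   Context: Column-orthogonal means $\mathbf{A}^\top\mathbf{A}=\mathbf{I}$. For a query feature matrix $\mathbf{D}$, the IP-OMP selection rule $\pi:[k]\to[n]$ is defined iteratively for $t=1,\dots,k$ by $\pi(t)=\arg\max_i \frac{|\langle\Pi^\perp_{t-1}\mathbf{d}_i,\Pi^\perp_{t-1}\mathbf{x}\rangle|}{\|\Pi^\perp_{t-1}\mathbf{d}_i\|_2\|\Pi^\perp_{t-1}\mathbf{x}\|_2}$ over not-yet-selected indices, with $\Pi^\perp_{t-1}$ the orthogonal projection onto the orthogonal complement of the span of $\mathbf{d}_{\pi(1)},\dots,\mathbf{d}_{\pi(t-1)}$. $f_{\mathbf{D}}(\mathbf{x},\{r_{\pi(i)}\}_{i=1}^k)$ is the maximum likelihood estimator of $y$ given $q_{\pi(i)}=r_{\pi(i)}$ for $i=1,\dots,k$, where $\pi$ is the IP-OMP selection computed with $\mathbf{D}$. *)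

theory Defs
  imports "HOL-Analysis.Analysis"
begin

definition proj_perp :: "(real^'d) set \<Rightarrow> real^'d \<Rightarrow> real^'d" where
  "proj_perp S v = (THE w. v - w \<in> span S \<and> (\<forall>s\<in>S. w \<bullet> s = 0))"

definition std_gauss_density :: "real^'d \<Rightarrow> real" where
  "std_gauss_density z = (2 * pi) powr (- real CARD('d) / 2) * exp (- (norm z)\<^sup>2 / 2)"

text \<open>IP-OMP selection rule (1-indexed steps t = 1..k) computed with the
  feature matrix D (columns d_i = column i D) for query x; ties may be broken arbitrarily.\<close>
definition ipomp_ratio :: "real^'n^'d \<Rightarrow> real^'d \<Rightarrow> (nat \<Rightarrow> 'n) \<Rightarrow> nat \<Rightarrow> 'n \<Rightarrow> real" where
  "ipomp_ratio D x \<pi> t i =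
     (let P = proj_perp ((\<lambda>j. column j D) ` \<pi> ` {1..<t}) in
      \<bar>P (column i D) \<bullet> P x\<bar> / (norm (P (column i D)) * norm (P x)))"

definition ipomp_selection :: "real^'n^'d \<Rightarrow> real^'d \<Rightarrow> nat \<Rightarrow> (nat \<Rightarrow> 'n) \<Rightarrow> bool" where
  "ipomp_selection D x k \<pi> \<longleftrightarrow>
     (\<forall>t\<in>{1..k}. \<pi> t \<notin> \<pi> ` {1..<t} \<and>
        (\<forall>i. i \<notin> \<pi> ` {1..<t} \<longrightarrow> ipomp_ratio D x \<pi> t i \<le> ipomp_ratio D x \<pi> t (\<pi> t)))"

text \<open>f_D(x, {r_{pi(i)}}): maximum likelihood estimate of y = <x, z>, z ~ N(0,I), given the
  observations q_{pi(i)} = <d_{pi(i)}, z> = r_{pi(i)}, i = 1..k: y evaluated at the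
  maximiser of the Gaussian likelihood of z over the set of z consistent with the observations.\<close>
definition mle_estimate :: "real^'n^'d \<Rightarrow> real^'d \<Rightarrow> nat \<Rightarrow> ('n \<Rightarrow> real) \<Rightarrow> (nat \<Rightarrow> 'n) \<Rightarrow> real" where
  "mle_estimate D x k r \<pi> =
     (let A = {z. \<forall>i\<in>{1..k}. column (\<pi> i) D \<bullet> z = r (\<pi> i)} in
      THE y. \<exists>zh\<in>A. (\<forall>z\<in>A. std_gauss_density z \<le> std_gauss_density zh) \<and> y = x \<bullet> zh)"

end

theory Submission
  imports Defs
begin

lemma orthon:
  fixes D :: "real^'n^'d"
  assumes "transpose D ** D = mat 1"
  shows "column i D \<bullet> column j D = (if i = j then 1 else 0)"
proof -
  have "(transpose D ** D) $ i $ j = mat 1 $ i $ j" using assms by simp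
  thus ?thesis by (simp add: matrix_mult_transpose_dot_column mat_def)
qed

lemma proj_perp_orth:
  fixes d :: "'n \<Rightarrow> real^'d"
  assumes on: "\<And>i j. d i \<bullet> d j = (if i = j then 1 else 0)" and fin: "finite J"
  shows "proj_perp (d ` J) v = v - (\<Sum>j\<in>J. (v \<bullet> d j) *\<^sub>R d j)"
  unfolding proj_perp_def
proof (rule the_equality)
  let ?w = "v - (\<Sum>j\<in>J. (v \<bullet> d j) *\<^sub>R d j)"
  have "v - ?w \<in> span (d ` J)"
    by (simp add: span_sum span_mul span_base)
  moreover have "\<forall>s\<in>d ` J. ?w \<bullet> s = 0"
  proof
    fix s assume "s \<in> d ` J"
    then obtain i where i: "i \<in> J" "s = d i" by auto
    have "(\<Sum>j\<in>J. (v \<bullet> d j) *\<^sub>R d j) \<bullet> d i = (\<Sum>j\<in>J. (v \<bullet> d j) * (d j \<bullet> d i))"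
      by (simp add: inner_sum_left)
    also have "\<dots> = v \<bullet> d i" using i fin by (simp add: on if_distrib cong: if_cong)
    finally show "?w \<bullet> s = 0" using i by (simp add: inner_diff_left)
  qed
  ultimately show "v - ?w \<in> span (d ` J) \<and> (\<forall>s\<in>d ` J. ?w \<bullet> s = 0)" by blast
  fix w assume w: "v - w \<in> span (d ` J) \<and> (\<forall>s\<in>d ` J. w \<bullet> s = 0)"
  have "?w - w = (v - w) - (v - ?w)" by simp
  also have "\<dots> \<in> span (d ` J)" using w \<open>v - ?w \<in> span (d ` J)\<close> by (simp add: span_diff)
  finally have sp: "?w - w \<in> span (d ` J)" .
  have "orthogonal (?w - w) (?w - w)"
    apply (rule orthogonal_to_span[OF sp])
    using w \<open>\<forall>s\<in>d ` J. ?w \<bullet> s = 0\<close> by (auto simp: orthogonal_def inner_diff_left)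
  thus "w = ?w" by (simp add: orthogonal_def)
qed


lemma proj_outside:
  fixes d :: "'n \<Rightarrow> real^'d"
  assumes on: "\<And>i j. d i \<bullet> d j = (if i = j then 1 else 0)" and fin: "finite J" and i: "i \<notin> J"
  shows "proj_perp (d ` J) (d i) = d i" "proj_perp (d ` J) v \<bullet> d i = v \<bullet> d i"
proof -
  have "(\<Sum>j\<in>J. (d i \<bullet> d j) *\<^sub>R d j) = 0"
    by (rule sum.neutral) (use i on in auto)
  thus "proj_perp (d ` J) (d i) = d i" by (simp add: proj_perp_orth[OF on fin])
  have "(\<Sum>j\<in>J. (v \<bullet> d j) *\<^sub>R d j) \<bullet> d i = (\<Sum>j\<in>J. (v \<bullet> d j) * (d j \<bullet> d i))"
    by (simp add: inner_sum_left)
  also have "\<dots> = 0" by (rule sum.neutral) (use i on in auto)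
  finally show "proj_perp (d ` J) v \<bullet> d i = v \<bullet> d i"
    by (simp add: proj_perp_orth[OF on fin] inner_diff_left)
qed

lemma greedy_step:
  fixes D :: "real^'n^'d"
  assumes orth: "transpose D ** D = mat 1"
    and sel: "ipomp_selection D x k \<pi>" and t: "t \<in> {1..k}" and i: "i \<notin> \<pi> ` {1..<t}"
  shows "\<bar>column i D \<bullet> x\<bar> \<le> \<bar>column (\<pi> t) D \<bullet> x\<bar>"
proof -
  define d where "d = (\<lambda>j. column j D)"
  have on: "\<And>i j. d i \<bullet> d j = (if i = j then 1 else 0)" unfolding d_def by (rule orthon[OF orth])
  define J where "J = \<pi> ` {1..<t}"
  have fin: "finite J" unfolding J_def by simp
  define P where "P = proj_perp (d ` J)"
  have img: "(\<lambda>j. column j D) ` \<pi> ` {1..<t} = d ` J" unfolding d_def J_def by simp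
  have pt: "\<pi> t \<notin> J" using sel t unfolding ipomp_selection_def J_def by blast
  have le: "ipomp_ratio D x \<pi> t i \<le> ipomp_ratio D x \<pi> t (\<pi> t)"
    using sel t i unfolding ipomp_selection_def by blast
  have ratio: "ipomp_ratio D x \<pi> t j = \<bar>d j \<bullet> x\<bar> / norm (P x)" if "j \<notin> J" for j
  proof -
    have n1: "norm (d j) = 1" using on[of j j] by (simp add: norm_eq_1)
    have "ipomp_ratio D x \<pi> t j = \<bar>P (d j) \<bullet> P x\<bar> / (norm (P (d j)) * norm (P x))"
      unfolding ipomp_ratio_def Let_def img P_def d_def by simp
    also have "\<dots> = \<bar>d j \<bullet> x\<bar> / norm (P x)"
      using proj_outside(1)[OF on fin that] proj_outside(2)[OF on fin that, of x] n1 unfolding P_def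
      by (simp add: inner_commute)
    finally show ?thesis .
  qed
  show ?thesis
  proof (cases "norm (P x) = 0")
    case True
    hence "P x = 0" by simp
    have iJ: "i \<notin> J" using i unfolding J_def .
    hence "d i \<bullet> x = 0" using proj_outside(2)[OF on fin iJ, of x] \<open>P x = 0\<close> unfolding P_def
      by (simp add: inner_commute)
    thus ?thesis unfolding d_def by simp
  next
    case False
    hence pos: "norm (P x) > 0" by simp
    from le have "\<bar>d i \<bullet> x\<bar> / norm (P x) \<le> \<bar>d (\<pi> t) \<bullet> x\<bar> / norm (P x)"
      using ratio[of i] ratio[OF pt] i unfolding J_def by simp
    thus ?thesis using pos unfolding d_def by (simp add: divide_right_mono_neg divide_le_cancel)
  qed
qed


lemma greedy_opt:
  fixes w :: "'n::finite \<Rightarrow> real" and \<pi> :: "nat \<Rightarrow> 'n"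
  assumes nn: "\<And>i. w i \<ge> 0" and inj: "inj_on \<pi> {1..k}"
    and gr: "\<And>t i. t \<in> {1..k} \<Longrightarrow> i \<notin> \<pi> ` {1..<t} \<Longrightarrow> w i \<le> w (\<pi> t)"
  shows "is_arg_max (\<lambda>T. \<Sum>i\<in>T. w i) (\<lambda>T. card T \<le> k) (\<pi> ` {1..k})"
proof -
  define S0 where "S0 = \<pi> ` {1..k}"
  have cS: "card S0 = k" unfolding S0_def using card_image[OF inj] by simp
  have out: "w i \<le> w s" if h1: "i \<notin> S0" and h2: "s \<in> S0" for i s
  proof -
    obtain t where t: "t \<in> {1..k}" "s = \<pi> t" using h2 unfolding S0_def by auto
    have "i \<notin> \<pi> ` {1..<t}" using h1 t(1) unfolding S0_def by auto
    thus ?thesis using gr[OF t(1)] t(2) by simp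
  qed
  have "(\<Sum>i\<in>T. w i) \<le> (\<Sum>i\<in>S0. w i)" if cT: "card T \<le> k" for T
  proof -
    have f: "finite T" "finite S0" by auto
    have s1: "(\<Sum>i\<in>T. w i) = (\<Sum>i\<in>T \<inter> S0. w i) + (\<Sum>i\<in>T - S0. w i)"
      by (metis f(1) sum.Int_Diff)
    have s2: "(\<Sum>i\<in>S0. w i) = (\<Sum>i\<in>T \<inter> S0. w i) + (\<Sum>i\<in>S0 - T. w i)"
      by (metis f(2) sum.Int_Diff Int_commute)
    have c1: "card T = card (T \<inter> S0) + card (T - S0)"
      by (metis f(1) card_Int_Diff)
    have c2: "card S0 = card (T \<inter> S0) + card (S0 - T)"
      by (metis f(2) card_Int_Diff Int_commute)
    have cc: "card (T - S0) \<le> card (S0 - T)" using c1 c2 cT cS by linarith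
    have "(\<Sum>i\<in>T - S0. w i) \<le> (\<Sum>i\<in>S0 - T. w i)"
    proof (cases "S0 - T = {}")
      case True
      have "card (S0 - T) = 0" using True by (simp only: card.empty)
      hence "card (T - S0) = 0" using cc by linarith
      hence "T - S0 = {}" using f by (meson card_0_eq finite_Diff)
      thus ?thesis using True by simp
    next
      case False
      define m where "m = Min (w ` (S0 - T))"
      have m0: "m \<ge> 0" unfolding m_def using False nn by (simp add: Min_ge_iff)
      have a: "w i \<le> m" if "i \<in> T - S0" for i
        unfolding m_def using False that out by (auto simp: Min_ge_iff)
      have b: "m \<le> w i" if "i \<in> S0 - T" for i
        unfolding m_def using that by simp
      have "(\<Sum>i\<in>T - S0. w i) \<le> of_nat (card (T - S0)) * m"
        using sum_bounded_above[of "T - S0" w m] a by simp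
      also have "\<dots> \<le> of_nat (card (S0 - T)) * m"
        using cc m0 by (simp add: mult_right_mono)
      also have "\<dots> \<le> (\<Sum>i\<in>S0 - T. w i)"
        using sum_bounded_below[of "S0 - T" m w] b by simp
      finally show ?thesis .
    qed
    thus ?thesis using s1 s2 by simp
  qed
  thus ?thesis unfolding S0_def[symmetric] is_arg_max_def using cS by (auto simp: not_less)
qed


lemma dens_le:
  fixes a b :: "real^'d"
  shows "std_gauss_density a \<le> std_gauss_density b \<longleftrightarrow> (norm b)\<^sup>2 \<le> (norm a)\<^sup>2"
proof -
  have c: "(2 * pi) powr (- real CARD('d) / 2) > 0" by simp
  show ?thesis unfolding std_gauss_density_def using c by simp
qed

lemma mle_orth:
  fixes D :: "real^'n^'d"
  assumes orth: "transpose D ** D = mat 1" and inj: "inj_on \<pi> {1..k}"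
  shows "mle_estimate D x k r \<pi> = (\<Sum>j\<in>\<pi> ` {1..k}. (column j D \<bullet> x) * r j)"
proof -
  define d where "d = (\<lambda>j. column j D)"
  have on: "\<And>i j. d i \<bullet> d j = (if i = j then 1 else 0)" unfolding d_def by (rule orthon[OF orth])
  define S0 where "S0 = \<pi> ` {1..k}"
  have fS: "finite S0" unfolding S0_def by simp
  define z0 where "z0 = (\<Sum>j\<in>S0. r j *\<^sub>R d j)"
  define A where "A = {z. \<forall>i\<in>{1..k}. column (\<pi> i) D \<bullet> z = r (\<pi> i)}"
  have Aiff: "z \<in> A \<longleftrightarrow> (\<forall>j\<in>S0. d j \<bullet> z = r j)" for z
    unfolding A_def S0_def d_def by auto
  have z0d: "d j \<bullet> z0 = r j" if "j \<in> S0" for j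
  proof -
    have "d j \<bullet> z0 = (\<Sum>i\<in>S0. r i * (d j \<bullet> d i))" unfolding z0_def by (simp add: inner_sum_right)
    also have "\<dots> = r j" using that fS by (simp add: on if_distrib cong: if_cong)
    finally show ?thesis .
  qed
  have z0A: "z0 \<in> A" using Aiff z0d by blast
  have pyth: "(norm z)\<^sup>2 = (norm z0)\<^sup>2 + (norm (z - z0))\<^sup>2" if "z \<in> A" for z
  proof -
    have "z0 \<bullet> (z - z0) = (\<Sum>j\<in>S0. r j * (d j \<bullet> (z - z0)))" unfolding z0_def by (simp add: inner_sum_left)
    also have "\<dots> = 0" using that z0A Aiff by (simp add: inner_diff_right)
    finally have "orthogonal z0 (z - z0)" by (simp add: orthogonal_def)
    from norm_add_Pythagorean[OF this] show ?thesis by simp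
  qed
  have "mle_estimate D x k r \<pi> = x \<bullet> z0"
    unfolding mle_estimate_def Let_def A_def[symmetric]
  proof (rule the_equality)
    show "\<exists>zh\<in>A. (\<forall>z\<in>A. std_gauss_density z \<le> std_gauss_density zh) \<and> x \<bullet> z0 = x \<bullet> zh"
    proof (intro bexI conjI ballI)
      fix z assume "z \<in> A"
      from pyth[OF this] show "std_gauss_density z \<le> std_gauss_density z0"
        unfolding dens_le by simp
    qed (use z0A in auto)
    fix y assume "\<exists>zh\<in>A. (\<forall>z\<in>A. std_gauss_density z \<le> std_gauss_density zh) \<and> y = x \<bullet> zh"
    then obtain zh where zh: "zh \<in> A" "std_gauss_density z0 \<le> std_gauss_density zh" "y = x \<bullet> zh"
      using z0A by blast
    have "(norm (zh - z0))\<^sup>2 = 0" using zh(2) pyth[OF zh(1)] zero_le_power2[of "norm (zh - z0)"] unfolding dens_le by linarith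
    hence "zh = z0" by simp
    thus "y = x \<bullet> z0" using zh(3) by simp
  qed
  also have "\<dots> = (\<Sum>j\<in>S0. (d j \<bullet> x) * r j)"
    unfolding z0_def by (simp add: inner_sum_right inner_commute mult.commute)
  finally show ?thesis unfolding S0_def d_def .
qed

theorem lemma3p1:
  fixes D :: "real^'n^'d" and x :: "real^'d" and r :: "'n \<Rightarrow> real"
    and k :: nat and \<pi> :: "nat \<Rightarrow> 'n"
  assumes "transpose D ** D = mat 1"
    and "ipomp_selection D x k \<pi>"
  shows "\<exists>S. is_arg_max (\<lambda>T. \<Sum>i\<in>T. \<bar>column i D \<bullet> x\<bar>) (\<lambda>T. card T \<le> k) S \<and>
             mle_estimate D x k r \<pi> = (\<Sum>i\<in>S. (column i D \<bullet> x) * r i)"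
proof -
  have inj: "inj_on \<pi> {1..k}"
  proof (rule inj_onI)
    have ne: "\<pi> s \<noteq> \<pi> t" if "s \<in> {1..k}" "t \<in> {1..k}" "s < t" for s t
    proof -
      have "\<pi> t \<notin> \<pi> ` {1..<t}" using assms(2) that(2) unfolding ipomp_selection_def by blast
      moreover have "s \<in> {1..<t}" using that by auto
      ultimately show ?thesis by (metis imageI)
    qed
    fix s t assume "s \<in> {1..k}" "t \<in> {1..k}" "\<pi> s = \<pi> t"
    thus "s = t" using ne[of s t] ne[of t s] by (metis linorder_neqE_nat)
  qed
  have am: "is_arg_max (\<lambda>T. \<Sum>i\<in>T. \<bar>column i D \<bullet> x\<bar>) (\<lambda>T. card T \<le> k) (\<pi> ` {1..k})"
    using greedy_opt[of "\<lambda>i. \<bar>column i D \<bullet> x\<bar>", OF _ inj greedy_step[OF assms]] by simp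
  show ?thesis using am mle_orth[OF assms(1) inj] by blast
qed

end
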